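(* For every integer $n\geq 0$, \[ \overline{p}(5n)\equiv (-1)^{n}\,\overline{p}(20n) \pmod{5}. \]
   Context: An overpartition of a nonnegative integer $n$ is a partition of $n$ (a nonincreasing sequence of positive integers summing to $n$) in which the first occurrence of each distinct part may be overlined. $\overline{p}(n)$ denotes the number of overpartitions of $n$, with $\overline{p}(0)=1$ and $\overline{p}(n)=0$ for $n<0$. Equivalently, $\sum_{n\ge0}\overline{p}(n)q^n=\prod_{k\ge1}\frac{1+q^k}{1-q^k}$. *)

theory Defs
  imports Main "HOL-Library.Multiset" "HOL-Number_Theory.Cong"
begin

text \<open>An overpartition of n is a partition together with a choice of which distinct
parts have their first occurrence overlined, i.e. a subset of the set of parts.\<close>

definition overpartitions :: "nat \<Rightarrow> (nat multiset \<times> nat set) set" where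
  "overpartitions n = {(M, S). (\<forall>k\<in>#M. k > 0) \<and> sum_mset M = n \<and> S \<subseteq> set_mset M}"

definition overpartition_count :: "nat \<Rightarrow> nat" where
  "overpartition_count n = card (overpartitions n)"

end

theory Submission
  imports Defs "HOL-Computational_Algebra.Formal_Power_Series" "HOL-Library.Numeral_Type" "HOL-Number_Theory.Cong"
begin

definition eqm :: "nat \<Rightarrow> 'a::comm_ring_1 fps \<Rightarrow> 'a fps \<Rightarrow> bool" where
  "eqm m A B \<longleftrightarrow> (\<forall>i<m. fps_nth A i = fps_nth B i)"

lemma eqm_refl[simp]: "eqm m A A" by (simp add: eqm_def)
lemma eqm_sym: "eqm m A B \<Longrightarrow> eqm m B A" by (simp add: eqm_def)
lemma eqm_trans: "eqm m A B \<Longrightarrow> eqm m B C \<Longrightarrow> eqm m A C" by (simp add: eqm_def)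
lemma eqm_mono: "eqm m A B \<Longrightarrow> k \<le> m \<Longrightarrow> eqm k A B" by (simp add: eqm_def)
lemma eqm_add: "eqm m A B \<Longrightarrow> eqm m C D \<Longrightarrow> eqm m (A + C) (B + D)" by (simp add: eqm_def)
lemma eqm_diff: "eqm m A B \<Longrightarrow> eqm m C D \<Longrightarrow> eqm m (A - C) (B - D)" by (simp add: eqm_def)
lemma eqm_mult: "eqm m A B \<Longrightarrow> eqm m C D \<Longrightarrow> eqm m (A * C) (B * D)"
  unfolding eqm_def fps_mult_nth by (auto intro!: sum.cong)
lemma eqm_power: "eqm m A B \<Longrightarrow> eqm m (A ^ k) (B ^ k)"
  by (induct k) (auto intro: eqm_mult)
lemma eqm_prod: "(\<And>i. i \<in> I \<Longrightarrow> eqm m (f i) (g i)) \<Longrightarrow> eqm m (prod f I) (prod g I)"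
  by (induct I rule: infinite_finite_induct) (auto intro: eqm_mult)
lemma eqm_sum: "(\<And>i. i \<in> I \<Longrightarrow> eqm m (f i) (g i)) \<Longrightarrow> eqm m (sum f I) (sum g I)"
  by (induct I rule: infinite_finite_induct) (auto intro: eqm_add)
lemma eqm_cancel:
  assumes "eqm m (A * U) (B * U)" "U * V = 1"
  shows "eqm m A B"
proof -
  have "eqm m (A * U * V) (B * U * V)" using assms(1) by (rule eqm_mult) simp
  thus ?thesis using assms(2) by (simp add: mult.assoc)
qed
lemma eqm_Xpow: "m \<le> k \<Longrightarrow> eqm m (fps_X ^ k * A) 0"
  by (simp add: eqm_def fps_X_power_mult_nth)
lemma eqm_eq: "(\<And>m. eqm m A B) \<Longrightarrow> A = B"
  by (auto simp: eqm_def fps_eq_iff)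

lemma pow5_type: "(x::5)^5 = x"
proof (induct x rule: bit1_induct)
  case (of_int z)
  then have "z \<in> {0,1,2,3,4}" by auto
  then show ?case by (auto simp: eval_nat_numeral)
qed

lemma frob_add: "((A::5 fps) + B)^5 = A^5 + B^5"
proof -
  have "(A+B)^5 = A^5 + B^5 + 5*(A^4*B + 2*A^3*B^2 + 2*A^2*B^3 + A*B^4)"
    by (simp add: algebra_simps eval_nat_numeral)
  moreover have "(5::5 fps) = 0"
  proof -
    have "(5::5 fps) = fps_const (5::5)" by (simp only: numeral_fps_const)
    also have "(5::5) = 0" by simp
    finally show ?thesis by simp
  qed
  ultimately show ?thesis by simp
qed

lemma frob_sum: "(sum f I :: 5 fps)^5 = sum (\<lambda>i. (f i)^5) I"
  by (induct I rule: infinite_finite_induct) (auto simp: frob_add)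

definition sub5 :: "'a::comm_ring_1 fps \<Rightarrow> 'a fps" where
  "sub5 A = Abs_fps (\<lambda>n. if 5 dvd n then fps_nth A (n div 5) else 0)"

lemma frob: "(A::5 fps)^5 = sub5 A"
proof (rule eqm_eq)
  fix m
  define S where "S = (\<Sum>i<m. fps_const (fps_nth A i) * fps_X^i)"
  have S: "eqm m A S" unfolding eqm_def S_def
    by (auto simp: fps_sum_nth fps_X_power_nth if_distrib cong: if_cong)
  have "S^5 = (\<Sum>i<m. fps_const (fps_nth A i) * fps_X^(5*i))"
    unfolding S_def frob_sum
    by (simp add: power_mult_distrib fps_const_power pow5_type power_mult mult.commute)
  moreover have "eqm m (\<Sum>i<m. fps_const (fps_nth A i) * fps_X^(5*i)) (sub5 A)"
    unfolding eqm_def sub5_def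
    by (auto simp: fps_sum_nth fps_X_power_nth if_distrib cong: if_cong) (auto intro!: sum.neutral)
  ultimately show "eqm m (A^5) (sub5 A)"
    using eqm_power[OF S, of 5] by (metis eqm_trans)
qed

definition cnt :: "'b set \<Rightarrow> ('b \<Rightarrow> nat) \<Rightarrow> nat \<Rightarrow> nat" where
  "cnt A f n = card {x\<in>A. f x = n}"
definition gen :: "'b set \<Rightarrow> ('b \<Rightarrow> nat) \<Rightarrow> 'a::comm_ring_1 fps" where
  "gen A f = Abs_fps (\<lambda>n. of_nat (cnt A f n))"
definition finfib :: "'b set \<Rightarrow> ('b \<Rightarrow> nat) \<Rightarrow> bool" where
  "finfib A f \<longleftrightarrow> (\<forall>n. finite {x\<in>A. f x = n})"

lemma gen_nth: "fps_nth (gen A f) n = of_nat (cnt A f n)"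
  by (simp add: gen_def)

lemma finfib_prod:
  assumes "finfib A f" "finfib B g"
  shows "finfib (A \<times> B) (\<lambda>(x,y). f x + g y)"
  unfolding finfib_def
proof
  fix n
  have "{p\<in>A \<times> B. (\<lambda>(x,y). f x + g y) p = n} \<subseteq> (\<Union>i\<in>{..n}. {x\<in>A. f x = i} \<times> {y\<in>B. g y = n - i})"
    by auto
  moreover have "finite (\<Union>i\<in>{..n}. {x\<in>A. f x = i} \<times> {y\<in>B. g y = n - i})"
    using assms unfolding finfib_def by auto
  ultimately show "finite {p\<in>A \<times> B. (\<lambda>(x,y). f x + g y) p = n}" by (rule finite_subset)
qed

lemma cnt_prod:
  assumes "finfib A f" "finfib B g"
  shows "cnt (A \<times> B) (\<lambda>(x,y). f x + g y) n = (\<Sum>i=0..n. cnt A f i * cnt B g (n - i))"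
proof -
  have eq: "{p\<in>A \<times> B. (\<lambda>(x,y). f x + g y) p = n} = (\<Union>i\<in>{0..n}. {x\<in>A. f x = i} \<times> {y\<in>B. g y = n - i})"
    by auto
  have "card (\<Union>i\<in>{0..n}. {x\<in>A. f x = i} \<times> {y\<in>B. g y = n - i})
      = (\<Sum>i=0..n. card ({x\<in>A. f x = i} \<times> {y\<in>B. g y = n - i}))"
    using assms unfolding finfib_def by (intro card_UN_disjoint) auto
  then show ?thesis unfolding cnt_def eq by (simp add: card_cartesian_product)
qed

lemma gen_mult:
  assumes "finfib A f" "finfib B g"
  shows "(gen A f * gen B g :: 'a::comm_ring_1 fps) = gen (A \<times> B) (\<lambda>(x,y). f x + g y)"
  by (simp add: fps_eq_iff fps_mult_nth gen_nth cnt_prod[OF assms])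

definition sq :: "int \<Rightarrow> nat" where "sq a = nat (a^2)"

lemma finfib_sq: "finfib A sq"
  unfolding finfib_def
proof
  fix n
  have "{x\<in>A. sq x = n} \<subseteq> {-int n..int n}"
  proof
    fix x assume "x \<in> {x\<in>A. sq x = n}"
    then have "x^2 = int n" unfolding sq_def by auto
    moreover have "\<bar>x\<bar> \<le> x^2"
    proof (cases "x = 0")
      case False
      then have "1 \<le> \<bar>x\<bar>" by linarith
      then have "\<bar>x\<bar> * 1 \<le> \<bar>x\<bar> * \<bar>x\<bar>" by (intro mult_left_mono) auto
      then show ?thesis by (simp add: power2_eq_square)
    qed simp
    ultimately show "x \<in> {-int n..int n}" by auto
  qed
  then show "finite {x\<in>A. sq x = n}" by (rule finite_subset) simp
qed

lemma prime5: "prime (5::int)"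
  unfolding prime_int_iff
proof (intro conjI allI impI)
  fix m :: int assume h: "0 \<le> m \<and> m dvd 5"
  then have "m \<noteq> 0" by auto
  with h have "0 < m" by auto
  with h have "m \<le> 5" using zdvd_imp_le[of m 5] by auto
  with \<open>0 < m\<close> have "m \<in> {1,2,3,4,5}" by auto
  with h show "m = 1 \<or> m = 5" by auto
qed simp

definition S2 :: "int \<Rightarrow> (int \<times> int) set" where
  "S2 N = {p. (fst p)^2 + (snd p)^2 = N}"

lemma finite_S2: "finite (S2 N)"
proof -
  have "S2 N \<subseteq> {-\<bar>N\<bar>..\<bar>N\<bar>} \<times> {-\<bar>N\<bar>..\<bar>N\<bar>}"
  proof
    fix p assume "p \<in> S2 N"
    then obtain a b where p: "p = (a,b)" and e: "a^2 + b^2 = N" unfolding S2_def by (cases p) auto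
    have ha: "\<bar>a\<bar> \<le> a^2"
    proof (cases "a = 0")
      case False
      then have "1 \<le> \<bar>a\<bar>" by linarith
      then have "\<bar>a\<bar> * 1 \<le> \<bar>a\<bar> * \<bar>a\<bar>" by (intro mult_left_mono) auto
      then show ?thesis by (simp add: power2_eq_square)
    qed simp
    have hb: "\<bar>b\<bar> \<le> b^2"
    proof (cases "b = 0")
      case False
      then have "1 \<le> \<bar>b\<bar>" by linarith
      then have "\<bar>b\<bar> * 1 \<le> \<bar>b\<bar> * \<bar>b\<bar>" by (intro mult_left_mono) auto
      then show ?thesis by (simp add: power2_eq_square)
    qed simp
    have "0 \<le> a^2" "0 \<le> b^2" by auto
    then show "p \<in> {-\<bar>N\<bar>..\<bar>N\<bar>} \<times> {-\<bar>N\<bar>..\<bar>N\<bar>}" using ha hb e p by auto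
  qed
  then show ?thesis by (rule finite_subset) auto
qed

lemma r2_identity:
  "card (S2 (5*m)) + card {p\<in>S2 (5*m). 5 dvd fst p \<and> 5 dvd snd p} = 2 * card (S2 m)"
proof -
  define A where "A = {p\<in>S2 (5*m). 5 dvd (2 * fst p + snd p)}"
  define B where "B = {p\<in>S2 (5*m). 5 dvd (2 * fst p - snd p)}"
  have fA: "finite A" "finite B" unfolding A_def B_def using finite_S2 by auto
  have UN: "A \<union> B = S2 (5*m)"
  proof
    show "A \<union> B \<subseteq> S2 (5*m)" unfolding A_def B_def by auto
    show "S2 (5*m) \<subseteq> A \<union> B"
    proof
      fix p assume p: "p \<in> S2 (5*m)"
      obtain a b where pab: "p = (a,b)" by (cases p)
      have e: "a^2 + b^2 = 5*m" using p pab unfolding S2_def by auto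
      have "(2*a+b)*(2*a-b) = 5*(a^2 - m)" using e by (simp add: algebra_simps power2_eq_square)
      then have "5 dvd (2*a+b)*(2*a-b)" by simp
      then have "5 dvd (2*a+b) \<or> 5 dvd (2*a-b)" using prime5 prime_dvd_mult_iff by blast
      then show "p \<in> A \<union> B" unfolding A_def B_def using p pab by auto
    qed
  qed
  have INT: "A \<inter> B = {p\<in>S2 (5*m). 5 dvd fst p \<and> 5 dvd snd p}"
  proof
    show "A \<inter> B \<subseteq> {p\<in>S2 (5*m). 5 dvd fst p \<and> 5 dvd snd p}"
    proof
      fix p assume p: "p \<in> A \<inter> B"
      obtain a b where pab: "p = (a,b)" by (cases p)
      have d1: "(5::int) dvd 2*a+b" and d2: "(5::int) dvd 2*a-b" using p pab unfolding A_def B_def by auto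
      have "(5::int) dvd (2*a+b) + (2*a-b)" using d1 d2 by (rule dvd_add)
      then have "(5::int) dvd 4*a" by (simp add: algebra_simps)
      then have "(5::int) dvd 5*a - 4*a" by (intro dvd_diff) auto
      then have da: "(5::int) dvd a" by simp
      then have "(5::int) dvd (2*a+b) - 2*a" using d1 by (intro dvd_diff) auto
      then have "(5::int) dvd b" by simp
      then show "p \<in> {p\<in>S2 (5*m). 5 dvd fst p \<and> 5 dvd snd p}" using p pab da unfolding A_def by auto
    qed
    show "{p\<in>S2 (5*m). 5 dvd fst p \<and> 5 dvd snd p} \<subseteq> A \<inter> B"
      unfolding A_def B_def by auto
  qed
  have cA: "card A = card (S2 m)"
  proof -
    have "bij_betw (\<lambda>(x,y). (2*x-y, x+2*y)) (S2 m) A"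
    proof (rule bij_betwI')
      show "\<And>p q. p \<in> S2 m \<Longrightarrow> q \<in> S2 m \<Longrightarrow> ((\<lambda>(x,y). (2*x-y, x+2*y)) p = (\<lambda>(x,y). (2*x-y, x+2*y)) q) = (p = q)"
        by auto
      show "\<And>p. p \<in> S2 m \<Longrightarrow> (\<lambda>(x,y). (2*x-y, x+2*y)) p \<in> A"
        unfolding A_def S2_def by (auto simp: algebra_simps power2_eq_square)
      show "\<And>q. q \<in> A \<Longrightarrow> \<exists>p\<in>S2 m. q = (\<lambda>(x,y). (2*x-y, x+2*y)) p"
      proof -
        fix q assume q: "q \<in> A"
        obtain a b where qab: "q = (a,b)" by (cases q)
        have e: "a^2+b^2 = 5*m" and d: "(5::int) dvd 2*a+b" using q qab unfolding A_def S2_def by auto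
        obtain x where x: "2*a+b = 5*x" using d by auto
        define y where "y = 2*x - a"
        have a: "a = 2*x - y" and b: "b = x + 2*y" using x unfolding y_def by auto
        have "5*(x^2+y^2) = 5*m" using e unfolding a b by (simp add: algebra_simps power2_eq_square)
        then have "(x,y) \<in> S2 m" unfolding S2_def by simp
        then show "\<exists>p\<in>S2 m. q = (\<lambda>(x,y). (2*x-y, x+2*y)) p" using a b qab by (intro bexI[of _ "(x,y)"]) auto
      qed
    qed
    then show ?thesis by (rule bij_betw_same_card[symmetric])
  qed
  have cB: "card B = card (S2 m)"
  proof -
    have "bij_betw (\<lambda>(x,y). (2*x+y, 2*y-x)) (S2 m) B"
    proof (rule bij_betwI')
      show "\<And>p q. p \<in> S2 m \<Longrightarrow> q \<in> S2 m \<Longrightarrow> ((\<lambda>(x,y). (2*x+y, 2*y-x)) p = (\<lambda>(x,y). (2*x+y, 2*y-x)) q) = (p = q)"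
        by auto
      show "\<And>p. p \<in> S2 m \<Longrightarrow> (\<lambda>(x,y). (2*x+y, 2*y-x)) p \<in> B"
        unfolding B_def S2_def by (auto simp: algebra_simps power2_eq_square)
      show "\<And>q. q \<in> B \<Longrightarrow> \<exists>p\<in>S2 m. q = (\<lambda>(x,y). (2*x+y, 2*y-x)) p"
      proof -
        fix q assume q: "q \<in> B"
        obtain a b where qab: "q = (a,b)" by (cases q)
        have e: "a^2+b^2 = 5*m" and d: "(5::int) dvd 2*a-b" using q qab unfolding B_def S2_def by auto
        obtain x where x: "2*a-b = 5*x" using d by auto
        define y where "y = a - 2*x"
        have a: "a = 2*x + y" and b: "b = 2*y - x" using x unfolding y_def by auto
        have "5*(x^2+y^2) = 5*m" using e unfolding a b by (simp add: algebra_simps power2_eq_square)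
        then have "(x,y) \<in> S2 m" unfolding S2_def by simp
        then show "\<exists>p\<in>S2 m. q = (\<lambda>(x,y). (2*x+y, 2*y-x)) p" using a b qab by (intro bexI[of _ "(x,y)"]) auto
      qed
    qed
    then show ?thesis by (rule bij_betw_same_card[symmetric])
  qed
  have "card A + card B = card (A \<union> B) + card (A \<inter> B)" using fA by (rule card_Un_Int)
  then show ?thesis using UN INT cA cB by simp
qed

definition S3 :: "int \<Rightarrow> ((int \<times> int) \<times> int) set" where
  "S3 N = {p. (fst (fst p))^2 + (snd (fst p))^2 + (snd p)^2 = N}"

lemma sq_mod4: "(a::int)^2 mod 4 = (if even a then 0 else 1)"
proof (cases "even a")
  case True
  then obtain k where "a = 2*k" by auto
  then show ?thesis by (simp add: power2_eq_square)
next
  case False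
  then obtain k where k: "a = 2*k+1" using oddE by blast
  define j where "j = k*k+k"
  have "a^2 = 4*j + 1" unfolding k j_def by (simp add: algebra_simps power2_eq_square)
  moreover have "(4*j+1) mod 4 = 1" by presburger
  ultimately show ?thesis using False by simp
qed


lemma mod4_add3: "((x::int)+y+z) mod 4 = ((x mod 4)+(y mod 4)+(z mod 4)) mod 4"
  by presburger

lemma all_even:
  assumes "a^2 + b^2 + c^2 = 4*(m::int)"
  shows "even a \<and> even b \<and> even c"
proof -
  have "(a^2 + b^2 + c^2) mod 4 = 0" using assms by simp
  then have "((a^2 mod 4) + (b^2 mod 4) + (c^2 mod 4)) mod 4 = 0"
    by (simp only: mod4_add3[symmetric])
  then show ?thesis unfolding sq_mod4
    by (cases "even a"; cases "even b"; cases "even c") simp_all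
qed


definition dbl :: "(int \<times> int) \<times> int \<Rightarrow> (int \<times> int) \<times> int" where
  "dbl p = ((2*fst(fst p), 2*snd(fst p)), 2*snd p)"
definition hlv :: "(int \<times> int) \<times> int \<Rightarrow> (int \<times> int) \<times> int" where
  "hlv p = ((fst(fst p) div 2, snd(fst p) div 2), snd p div 2)"

lemma r3_4: "card (S3 (4*m)) = card (S3 m)"
proof -
  have "bij_betw dbl (S3 m) (S3 (4*m))"
  proof (rule bij_betw_byWitness[where f'=hlv])
    show "\<forall>a\<in>S3 m. hlv (dbl a) = a" by (simp add: hlv_def dbl_def)
    show "\<forall>a'\<in>S3 (4*m). dbl (hlv a') = a'"
    proof
      fix q assume q: "q \<in> S3 (4*m)"
      then have "even (fst (fst q)) \<and> even (snd (fst q)) \<and> even (snd q)"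
        unfolding S3_def by (intro all_even) simp
      then show "dbl (hlv q) = q" by (simp add: hlv_def dbl_def prod_eq_iff)
    qed
    show "dbl ` S3 m \<subseteq> S3 (4*m)"
      by (auto simp: S3_def dbl_def power_mult_distrib)
    show "hlv ` S3 (4*m) \<subseteq> S3 m"
    proof
      fix p assume "p \<in> hlv ` S3 (4*m)"
      then obtain q where q: "q \<in> S3 (4*m)" and p: "p = hlv q" by auto
      then have ev: "even (fst (fst q)) \<and> even (snd (fst q)) \<and> even (snd q)"
        unfolding S3_def by (intro all_even) simp
      have "dbl p = q" using ev unfolding p by (simp add: hlv_def dbl_def prod_eq_iff)
      then have "dbl p \<in> S3 (4*m)" using q by simp
      then show "p \<in> S3 m" by (simp add: S3_def dbl_def power_mult_distrib)
    qed
  qed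
  then show ?thesis by (rule bij_betw_same_card[symmetric])
qed

definition comp :: "nat \<Rightarrow> 'a::comm_ring_1 fps \<Rightarrow> 'a fps" where
  "comp c A = Abs_fps (\<lambda>n. if n mod 5 = c then fps_nth A n else 0)"
definition supp :: "nat \<Rightarrow> 'a::comm_ring_1 fps \<Rightarrow> bool" where
  "supp c A \<longleftrightarrow> (\<forall>n. n mod 5 \<noteq> c \<longrightarrow> fps_nth A n = 0)"
definition E5 :: "'a::comm_ring_1 fps \<Rightarrow> 'a fps" where
  "E5 A = Abs_fps (\<lambda>n. fps_nth A (5*n))"
definition twist :: "'a::comm_ring_1 fps \<Rightarrow> 'a fps" where
  "twist A = Abs_fps (\<lambda>n. (-1)^n * fps_nth A n)"

lemma supp_mult:
  assumes "supp a A" "supp b B"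
  shows "supp ((a+b) mod 5) (A*B)"
  unfolding supp_def
proof (intro allI impI)
  fix n assume n: "n mod 5 \<noteq> (a+b) mod 5"
  have "fps_nth A i * fps_nth B (n-i) = 0" if "i \<in> {0..n}" for i
  proof (cases "i mod 5 = a \<and> (n-i) mod 5 = b")
    case True
    then have "(i + (n-i)) mod 5 = (a+b) mod 5" by (metis mod_add_eq)
    then show ?thesis using n that by auto
  next
    case False
    then show ?thesis using assms unfolding supp_def by auto
  qed
  then show "fps_nth (A*B) n = 0" by (simp add: fps_mult_nth)
qed

lemma supp_one: "supp 0 1" by (auto simp: supp_def)
lemma supp_pow: "supp a A \<Longrightarrow> supp ((a*k) mod 5) (A^k)"
proof (induct k)
  case 0 then show ?case by (simp add: supp_one)
next
  case (Suc k)
  then have "supp ((a + (a*k) mod 5) mod 5) (A * A^k)" by (intro supp_mult) auto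
  moreover have "(a + (a*k) mod 5) mod 5 = (a * Suc k) mod 5" by (simp add: mod_add_right_eq add.commute)
  ultimately show ?case by simp
qed

lemma comp_add: "comp c (A + B) = comp c A + comp c B"
  by (simp add: comp_def fps_eq_iff)
lemma comp_const_mult: "comp c (fps_const k * A) = fps_const k * comp c A"
  by (simp add: comp_def fps_eq_iff)
lemma comp_numeral_mult: "comp c (numeral k * A) = numeral k * comp c A"
  by (simp add: numeral_fps_const comp_const_mult)
lemma comp_supp: "supp c A \<Longrightarrow> c < 5 \<Longrightarrow> comp d A = (if d = c then A else 0)"
  by (auto simp: comp_def supp_def fps_eq_iff)
lemma supp_comp: "supp (c mod 5) (comp c A)"
  by (auto simp: comp_def supp_def)

lemma sub5_nth: "fps_nth (sub5 A) n = (if 5 dvd n then fps_nth A (n div 5) else 0)"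
  by (simp add: sub5_def)

lemma sub5_mult: "sub5 (A * B) = sub5 A * sub5 B"
proof (rule fps_ext)
  fix n
  show "fps_nth (sub5 (A*B)) n = fps_nth (sub5 A * sub5 B) n"
  proof (cases "5 dvd n")
    case True
    then obtain k where n: "n = 5*k" by auto
    have "fps_nth (sub5 A * sub5 B) n = (\<Sum>i=0..n. (if 5 dvd i then fps_nth A (i div 5) else 0) * (if 5 dvd (n-i) then fps_nth B ((n-i) div 5) else 0))"
      by (simp add: fps_mult_nth sub5_nth)
    also have "\<dots> = (\<Sum>i\<in>(\<lambda>j. 5*j) ` {0..k}. (if 5 dvd i then fps_nth A (i div 5) else 0) * (if 5 dvd (n-i) then fps_nth B ((n-i) div 5) else 0))"
      by (rule sum.mono_neutral_right) (auto simp: n)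
    also have "\<dots> = (\<Sum>j=0..k. fps_nth A j * fps_nth B (k - j))"
    proof (subst sum.reindex)
      show "inj_on (\<lambda>j. 5*j) {0..k}" by (auto simp: inj_on_def)
      show "(\<Sum>j\<in>{0..k}. ((\<lambda>i. (if 5 dvd i then fps_nth A (i div 5) else 0) * (if 5 dvd (n-i) then fps_nth B ((n-i) div 5) else 0)) \<circ> (\<lambda>j. 5*j)) j)
            = (\<Sum>j=0..k. fps_nth A j * fps_nth B (k - j))"
      proof (rule sum.cong)
        fix j assume "j \<in> {0..k}"
        then have "n - 5*j = 5*(k-j)" by (simp add: n diff_mult_distrib2)
        then show "((\<lambda>i. (if 5 dvd i then fps_nth A (i div 5) else 0) * (if 5 dvd (n-i) then fps_nth B ((n-i) div 5) else 0)) \<circ> (\<lambda>j. 5*j)) j = fps_nth A j * fps_nth B (k - j)"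
          by simp
      qed simp
    qed
    also have "\<dots> = fps_nth (sub5 (A*B)) n" by (simp add: sub5_nth n fps_mult_nth)
    finally show ?thesis ..
  next
    case False
    have "fps_nth (sub5 A * sub5 B) n = (\<Sum>i=0..n. (if 5 dvd i then fps_nth A (i div 5) else 0) * (if 5 dvd (n-i) then fps_nth B ((n-i) div 5) else 0))"
      by (simp add: fps_mult_nth sub5_nth)
    also have "\<dots> = 0"
    proof (rule sum.neutral, intro ballI)
      fix i assume i: "i \<in> {0..n}"
      show "(if 5 dvd i then fps_nth A (i div 5) else 0) * (if 5 dvd (n-i) then fps_nth B ((n-i) div 5) else 0) = 0"
      proof (cases "5 dvd i \<and> 5 dvd (n-i)")
        case True
        then have "5 dvd (i + (n-i))" by (intro dvd_add) auto
        then show ?thesis using i False by auto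
      qed auto
    qed
    finally show ?thesis using False by (simp add: sub5_nth)
  qed
qed

lemma sub5_one: "sub5 1 = 1"
  by (auto simp: fps_eq_iff sub5_nth elim!: dvdE)

lemma sub5_power: "sub5 (A^k) = (sub5 A)^k"
  by (induct k) (simp_all add: sub5_mult sub5_one)

lemma sub5_inj: "sub5 A = sub5 B \<Longrightarrow> A = B"
proof (rule fps_ext)
  fix n assume "sub5 A = sub5 B"
  then have "fps_nth (sub5 A) (5*n) = fps_nth (sub5 B) (5*n)" by simp
  then show "fps_nth A n = fps_nth B n" by (simp add: sub5_nth)
qed

lemma comp0_E5: "comp 0 A = sub5 (E5 A)"
  by (auto simp: comp_def sub5_nth E5_def fps_eq_iff)

lemma twist_mult: "twist (A * B) = twist A * twist B"
proof (rule fps_ext)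
  fix n
  have "fps_nth (twist A * twist B) n = (\<Sum>i=0..n. (-1)^n * (fps_nth A i * fps_nth B (n-i)))"
  proof (simp add: fps_mult_nth twist_def, rule sum.cong)
    fix i assume "i \<in> {0..n}"
    then have "(-1::'a)^n = (-1)^i * (-1)^(n-i)" by (simp add: power_add[symmetric])
    then show "(-1)^i * fps_nth A i * ((-1)^(n-i) * fps_nth B (n-i)) = (-1)^n * (fps_nth A i * fps_nth B (n-i))"
      by (simp add: algebra_simps)
  qed simp
  then show "fps_nth (twist (A*B)) n = fps_nth (twist A * twist B) n"
    by (simp add: twist_def fps_mult_nth sum_distrib_left)
qed

lemma twist_power: "twist (A^k) = (twist A)^k"
proof (induct k)
  case 0 then show ?case by (auto simp: twist_def fps_eq_iff)
next
  case (Suc k) then show ?case by (simp add: twist_mult)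
qed

lemma E5_twist: "E5 (twist A) = twist (E5 A)"
proof -
  have "(-1::'a)^(5*n) = (-1)^n" for n
    by (simp add: power_mult) 
  then show ?thesis by (simp add: E5_def twist_def fps_eq_iff)
qed

definition T :: "5 fps" where "T = gen (UNIV::int set) sq"
definition s2 :: "int \<times> int \<Rightarrow> nat" where "s2 = (\<lambda>(x,y). sq x + sq y)"
definition D5 :: "int set" where "D5 = {a. 5 dvd a}"

lemma int_sq[simp]: "int (sq a) = a^2" by (simp add: sq_def)

lemma sq_eq2: "sq x + sq y = N \<longleftrightarrow> x^2 + y^2 = int N"
proof -
  have "0 \<le> x^2" "0 \<le> y^2" by auto
  then show ?thesis unfolding sq_def by linarith
qed

lemma T2: "T * T = gen (UNIV \<times> UNIV) s2"
  unfolding T_def s2_def by (rule gen_mult) (rule finfib_sq)+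

lemma cnt_s2: "cnt UNIV s2 N = card (S2 (int N))"
proof -
  have "{p \<in> UNIV. s2 p = N} = S2 (int N)"
    by (auto simp: s2_def S2_def sq_eq2)
  then show ?thesis by (simp add: cnt_def)
qed

lemma cnt_D5: "cnt (D5 \<times> D5) s2 N = card {p\<in>S2 (int N). 5 dvd fst p \<and> 5 dvd snd p}"
proof -
  have "{p \<in> D5 \<times> D5. s2 p = N} = {p\<in>S2 (int N). 5 dvd fst p \<and> 5 dvd snd p}"
    by (auto simp: s2_def S2_def sq_eq2 D5_def)
  then show ?thesis by (simp add: cnt_def)
qed

lemma dvd5_sq: "(5::int) dvd a^2 \<longleftrightarrow> 5 dvd a"
  using prime_dvd_power_iff[OF prime5, of 2 a] by simp

lemma sq_mod5: "(a::int)^2 mod 5 \<in> {0,1,4}"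
proof -
  have "a^2 mod 5 = ((a mod 5)^2) mod 5" by (simp add: power_mod)
  moreover have "a mod 5 \<in> {0,1,2,3,4}" by auto
  ultimately show ?thesis by (auto simp: power2_eq_square)
qed

lemma T_nth: "fps_nth T n = of_nat (card {a. sq a = n})"
  by (simp add: T_def gen_nth cnt_def)

lemma T_nz: "fps_nth T n \<noteq> 0 \<Longrightarrow> n mod 5 \<in> {0,1,4}"
proof -
  assume "fps_nth T n \<noteq> 0"
  then have "card {a. sq a = n} \<noteq> 0" by (metis of_nat_0 T_nth)
  then obtain a where a: "sq a = n" by (metis (mono_tags, lifting) card.empty empty_Collect_eq)
  then have "int n = a^2" using int_sq[of a] by simp
  then have "int (n mod 5) = a^2 mod 5" by (metis of_nat_numeral zmod_int)
  then show ?thesis using sq_mod5[of a] by auto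
qed

lemma Tdec: "T = comp 0 T + comp 1 T + comp 4 T"
proof (rule fps_ext)
  fix n
  show "fps_nth T n = fps_nth (comp 0 T + comp 1 T + comp 4 T) n"
    using T_nz[of n] by (cases "fps_nth T n = 0") (auto simp: comp_def)
qed

lemma X0_gen: "comp 0 T = gen D5 sq"
proof (rule fps_ext)
  fix n
  have "{a \<in> D5. sq a = n} = (if n mod 5 = 0 then {a. sq a = n} else {})"
  proof (cases "n mod 5 = 0")
    case True
    have "5 dvd a" if "sq a = n" for a
    proof -
      have "int n = a^2" using that int_sq[of a] by simp
      moreover have "(5::int) dvd int n" using True by presburger
      ultimately show ?thesis using dvd5_sq by simp
    qed
    then show ?thesis using True by (auto simp: D5_def)
  next
    case False
    have "\<not> 5 dvd a" if "sq a = n" for a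
    proof
      assume "5 dvd a"
      then have "(5::int) dvd a^2" by (simp add: dvd5_sq)
      moreover have "int n = a^2" using that int_sq[of a] by simp
      ultimately have "(5::int) dvd int n" by simp
      then show False using False by presburger
    qed
    then show ?thesis using False by (auto simp: D5_def)
  qed
  then show "fps_nth (comp 0 T) n = fps_nth (gen D5 sq) n"
    by (auto simp: comp_def gen_nth cnt_def T_nth)
qed

lemma X0sq: "comp 0 T * comp 0 T = gen (D5 \<times> D5) s2"
  unfolding X0_gen s2_def by (rule gen_mult) (rule finfib_sq)+

lemma r2_fps: "comp 0 (T*T) + comp 0 T * comp 0 T = 2 * sub5 (T*T)"
proof (rule fps_ext)
  fix n
  have s0: "supp 0 (comp 0 T * comp 0 T)"
    using supp_mult[OF supp_comp[of 0 T] supp_comp[of 0 T]] by simp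
  show "fps_nth (comp 0 (T*T) + comp 0 T * comp 0 T) n = fps_nth (2 * sub5 (T*T)) n"
  proof (cases "5 dvd n")
    case True
    then obtain m where n: "n = 5*m" by auto
    have a1: "fps_nth (comp 0 (T*T)) n = of_nat (card (S2 (5 * int m)))"
      by (simp add: n comp_def T2 gen_nth cnt_s2)
    have a2: "fps_nth (comp 0 T * comp 0 T) n = of_nat (card {p\<in>S2 (5 * int m). 5 dvd fst p \<and> 5 dvd snd p})"
      by (simp only: X0sq gen_nth cnt_D5 n of_nat_mult of_nat_numeral)
    have "fps_nth (comp 0 (T*T) + comp 0 T * comp 0 T) n
        = of_nat (card (S2 (5 * int m)) + card {p\<in>S2 (5 * int m). 5 dvd fst p \<and> 5 dvd snd p})"
      using a1 a2 by simp
    also have "\<dots> = of_nat (2 * card (S2 (int m)))" by (simp only: r2_identity)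
    also have "\<dots> = fps_nth (2 * sub5 (T*T)) n"
      by (simp add: n sub5_nth T2 gen_nth cnt_s2 numeral_fps_const)
    finally show ?thesis .
  next
    case False
    then have "n mod 5 \<noteq> 0" by presburger
    then show ?thesis using s0 False
      by (simp add: comp_def sub5_nth numeral_fps_const supp_def)
  qed
qed

definition X0 :: "5 fps" where "X0 = comp 0 T"
definition X1 :: "5 fps" where "X1 = comp 1 T"
definition X4 :: "5 fps" where "X4 = comp 4 T"
definition mon :: "nat \<Rightarrow> nat \<Rightarrow> nat \<Rightarrow> 5 fps" where "mon a b c = X0^a * X1^b * X4^c"

lemma Tdec': "T = X0 + X1 + X4" unfolding X0_def X1_def X4_def by (rule Tdec)

lemma supp_mon: "supp ((b + 4*c) mod 5) (mon a b c)"
proof -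
  have s0: "supp 0 X0" using supp_comp[of 0 T] by (simp add: X0_def)
  have s1: "supp 1 X1" using supp_comp[of 1 T] by (simp add: X1_def)
  have s4: "supp 4 X4" using supp_comp[of 4 T] by (simp add: X4_def)
  have "supp ((((0*a) mod 5 + (1*b) mod 5) mod 5 + (4*c) mod 5) mod 5) (X0^a * X1^b * X4^c)"
    by (intro supp_mult supp_pow s0 s1 s4)
  moreover have "(((0*a) mod 5 + (1*b) mod 5) mod 5 + (4*c) mod 5) mod 5 = (b + 4*c) mod 5"
    by (simp add: mod_add_eq)
  ultimately show ?thesis by (simp add: mon_def)
qed

lemma comp0_mon: "comp 0 (mon a b c) = (if (b + 4*c) mod 5 = 0 then mon a b c else 0)"
  using comp_supp[OF supp_mon[of b c a]] by auto
lemma comp0_nmon: "comp 0 (numeral k * mon a b c) = (if (b + 4*c) mod 5 = 0 then numeral k * mon a b c else 0)"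
  by (simp add: comp_numeral_mult comp0_mon)

lemma T2_exp: "T * T = mon 2 0 0 + mon 0 2 0 + mon 0 0 2 + 2*mon 1 1 0 + 2*mon 1 0 1 + 2*mon 0 1 1"
  unfolding Tdec' mon_def by (simp add: algebra_simps eval_nat_numeral)

lemma T4_exp: "T^4 = mon 4 0 0 + 4*mon 3 1 0 + 4*mon 3 0 1 + 6*mon 2 2 0 + 6*mon 2 0 2 + 12*mon 2 1 1
   + 4*mon 1 3 0 + 4*mon 1 0 3 + 12*mon 1 2 1 + 12*mon 1 1 2 + mon 0 4 0 + mon 0 0 4 + 4*mon 0 3 1
   + 4*mon 0 1 3 + 6*mon 0 2 2"
  unfolding Tdec' mon_def by (simp add: algebra_simps eval_nat_numeral)

lemma five_fps: "(5::5 fps) = 0"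
proof -
  have "(5::5 fps) = fps_const (5::5)" by (simp only: numeral_fps_const)
  also have "(5::5) = 0" by simp
  finally show ?thesis by simp
qed

lemma six_fps: "(6::5 fps) = 1"
proof -
  have "(6::5 fps) = fps_const (6::5)" by (simp only: numeral_fps_const)
  also have "(6::5) = 1" by simp
  finally show ?thesis by simp
qed

lemma twelve_fps: "(12::5 fps) = 2"
proof -
  have "(12::5 fps) = fps_const (12::5)" by (simp only: numeral_fps_const)
  also have "(12::5) = 2" by simp
  finally show ?thesis by (simp add: numeral_fps_const)
qed

lemma U_eq: "mon 2 0 0 + mon 0 1 1 = sub5 (T*T)"
proof -
  have c: "comp 0 (T*T) = mon 2 0 0 + 2 * mon 0 1 1"
    unfolding T2_exp by (simp add: comp_add comp0_mon comp0_nmon)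
  have "comp 0 T * comp 0 T = mon 2 0 0"
    by (simp add: mon_def X0_def power2_eq_square)
  with r2_fps c have "2 * (mon 2 0 0 + mon 0 1 1) = 2 * sub5 (T*T)"
    by (simp add: algebra_simps)
  then have "3 * (2 * (mon 2 0 0 + mon 0 1 1)) = 3 * (2 * sub5 (T*T))" by simp
  then show ?thesis by (simp add: mult.assoc[symmetric] six_fps)
qed

lemma comp0_T4: "comp 0 (T^4) = sub5 (T^4)"
proof -
  have "comp 0 (T^4) = mon 4 0 0 + 12*mon 2 1 1 + 6*mon 0 2 2"
    unfolding T4_exp by (simp add: comp_add comp0_mon comp0_nmon)
  also have "\<dots> = mon 4 0 0 + 2*mon 2 1 1 + mon 0 2 2"
    by (simp add: twelve_fps six_fps)
  also have "\<dots> = (mon 2 0 0 + mon 0 1 1)^2"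
    unfolding mon_def by (simp add: algebra_simps eval_nat_numeral)
  also have "\<dots> = sub5 ((T*T)*(T*T))"
    unfolding U_eq power2_eq_square by (rule sub5_mult[symmetric])
  also have "(T*T)*(T*T) = T^4" by (simp add: eval_nat_numeral mult.assoc)
  finally show ?thesis .
qed

lemma E5_T4: "E5 (T^4) = T^4"
  using comp0_T4 by (simp add: comp0_E5 sub5_inj)

definition Par :: "nat \<Rightarrow> nat \<Rightarrow> nat multiset set" where
  "Par N n = {M. set_mset M \<subseteq> {1..N} \<and> sum_mset M = n}"

lemma size_le_sum: "set_mset M \<subseteq> {1..N} \<Longrightarrow> size M \<le> sum_mset M"
proof (induct M)
  case empty then show ?case by simp
next
  case (add x M)
  then have "1 \<le> x" by auto
  with add show ?case by auto
qed

lemma finite_Par: "finite (Par N n)"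
proof -
  have "Par N n \<subseteq> (\<Union>s\<in>{0..n}. multisets_of_size {1..N} s)"
  proof
    fix M assume "M \<in> Par N n"
    then have "set_mset M \<subseteq> {1..N}" "sum_mset M = n" by (auto simp: Par_def)
    then show "M \<in> (\<Union>s\<in>{0..n}. multisets_of_size {1..N} s)"
      using size_le_sum[of M N] by (auto simp: multisets_of_size_def)
  qed
  then show ?thesis by (rule finite_subset) auto
qed

definition w :: "nat \<Rightarrow> nat \<Rightarrow> nat" where
  "w N n = (\<Sum>M\<in>Par N n. 2 ^ card (set_mset M))"

lemma Par_0: "Par 0 n = (if n = 0 then {{#}} else {})"
  by (auto simp: Par_def)

lemma w_0: "w 0 n = (if n = 0 then 1 else 0)"
  by (simp add: w_def Par_0)

lemma Par_Suc:
  "Par (Suc N) n = (\<lambda>(j,M'). M' + replicate_mset j (Suc N)) ` (SIGMA j:{j. j * Suc N \<le> n}. Par N (n - j * Suc N))"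
proof
  show "(\<lambda>(j,M'). M' + replicate_mset j (Suc N)) ` (SIGMA j:{j. j * Suc N \<le> n}. Par N (n - j * Suc N)) \<subseteq> Par (Suc N) n"
  proof clarify
    fix j M' assume h: "j * Suc N \<le> n" "M' \<in> Par N (n - j * Suc N)"
    then have "set_mset M' \<subseteq> {1..Suc N}" by (auto simp: Par_def)
    then show "M' + replicate_mset j (Suc N) \<in> Par (Suc N) n" using h by (auto simp: Par_def)
  qed
  show "Par (Suc N) n \<subseteq> (\<lambda>(j,M'). M' + replicate_mset j (Suc N)) ` (SIGMA j:{j. j * Suc N \<le> n}. Par N (n - j * Suc N))"
  proof
    fix M assume M: "M \<in> Par (Suc N) n"
    define j where "j = count M (Suc N)"
    define M' where "M' = filter_mset (\<lambda>x. x \<noteq> Suc N) M"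
    have eq: "M = M' + replicate_mset j (Suc N)"
      by (rule multiset_eqI) (auto simp: M'_def j_def)
    have "sum_mset M = sum_mset M' + j * Suc N" by (subst eq) simp
    then have s: "sum_mset M' = n - j * Suc N" "j * Suc N \<le> n" using M by (auto simp: Par_def)
    have "set_mset M' \<subseteq> {1..N}" using M by (auto simp: M'_def Par_def le_Suc_eq)
    then have "(j, M') \<in> (SIGMA j:{j. j * Suc N \<le> n}. Par N (n - j * Suc N))"
      using s by (auto simp: Par_def)
    then show "M \<in> (\<lambda>(j,M'). M' + replicate_mset j (Suc N)) ` (SIGMA j:{j. j * Suc N \<le> n}. Par N (n - j * Suc N))"
      using eq by (intro image_eqI[of _ _ "(j, M')"]) auto
  qed
qed

lemma inj_Par_Suc:
  "inj_on (\<lambda>(j,M'). M' + replicate_mset j (Suc N)) (SIGMA j:{j. j * Suc N \<le> n}. Par N (n - j * Suc N))"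
proof (rule inj_onI, clarify)
  fix j1 M1 j2 M2
  assume h: "M1 \<in> Par N (n - j1 * Suc N)" "M2 \<in> Par N (n - j2 * Suc N)"
    and e: "M1 + replicate_mset j1 (Suc N) = M2 + replicate_mset j2 (Suc N)"
  have n1: "Suc N \<notin># M1" and n2: "Suc N \<notin># M2" using h by (auto simp: Par_def)
  have "count (M1 + replicate_mset j1 (Suc N)) (Suc N) = count (M2 + replicate_mset j2 (Suc N)) (Suc N)"
    using e by simp
  then have "j1 = j2" using n1 n2 by (simp add: not_in_iff)
  then show "j1 = j2 \<and> M1 = M2" using e by simp
qed

lemma w_Suc: "w (Suc N) n = (\<Sum>j\<in>{j. j * Suc N \<le> n}. (if j = 0 then 1 else 2) * w N (n - j * Suc N))"
proof -
  have fin: "finite {j. j * Suc N \<le> n}"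
    by (rule finite_subset[of _ "{0..n}"]) (auto intro: order.trans[OF _ ])
  have "w (Suc N) n = (\<Sum>p\<in>(SIGMA j:{j. j * Suc N \<le> n}. Par N (n - j * Suc N)).
          2 ^ card (set_mset ((\<lambda>(j,M'). M' + replicate_mset j (Suc N)) p)))"
    unfolding w_def Par_Suc by (subst sum.reindex[OF inj_Par_Suc]) (simp add: comp_def)
  also have "\<dots> = (\<Sum>p\<in>(SIGMA j:{j. j * Suc N \<le> n}. Par N (n - j * Suc N)).
          (\<lambda>(j,M'). (if j = 0 then 1 else 2) * 2 ^ card (set_mset M')) p)"
  proof (rule sum.cong[OF refl])
    fix p assume p: "p \<in> (SIGMA j:{j. j * Suc N \<le> n}. Par N (n - j * Suc N))"
    obtain j M' where pj: "p = (j, M')" by (cases p)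
    have nin: "Suc N \<notin> set_mset M'" using p by (auto simp: Par_def pj)
    show "(2::nat) ^ card (set_mset ((\<lambda>(j,M'). M' + replicate_mset j (Suc N)) p)) =
          (\<lambda>(j,M'). (if j = 0 then 1 else 2) * 2 ^ card (set_mset M')) p"
      using nin by (auto simp: pj card_insert_if)
  qed
  also have "\<dots> = (\<Sum>j\<in>{j. j * Suc N \<le> n}. \<Sum>M'\<in>Par N (n - j * Suc N). (if j = 0 then 1 else 2) * 2 ^ card (set_mset M'))"
    using fin finite_Par by (subst sum.Sigma) (auto simp del: mult_Suc)
  also have "\<dots> = (\<Sum>j\<in>{j. j * Suc N \<le> n}. (if j = 0 then 1 else 2) * w N (n - j * Suc N))"
    by (simp add: w_def sum_distrib_left)
  finally show ?thesis .
qed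


definition gk :: "nat \<Rightarrow> 'a::comm_ring_1 fps" where
  "gk k = Abs_fps (\<lambda>n. if n = 0 then 1 else if k dvd n then 2 else 0)"
definition PN :: "nat \<Rightarrow> 'a::comm_ring_1 fps" where
  "PN N = (\<Prod>i<N. gk (Suc i))"

lemma gk_mult_nth:
  assumes "0 < k"
  shows "fps_nth (gk k * A) n = (\<Sum>j\<in>{j. j * k \<le> n}. (if j = 0 then 1 else 2) * fps_nth A (n - j * k))"
proof -
  have "fps_nth (gk k * A) n = (\<Sum>i=0..n. fps_nth (gk k) i * fps_nth A (n - i))"
    by (simp add: fps_mult_nth)
  also have "\<dots> = (\<Sum>i\<in>(\<lambda>j. j * k) ` {j. j * k \<le> n}. fps_nth (gk k) i * fps_nth A (n - i))"
    by (rule sum.mono_neutral_right) (auto simp: gk_def image_iff mult.commute elim!: dvdE)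
  also have "\<dots> = (\<Sum>j\<in>{j. j * k \<le> n}. fps_nth (gk k) (j * k) * fps_nth A (n - j * k))"
    using assms by (subst sum.reindex) (auto simp: inj_on_def)
  also have "\<dots> = (\<Sum>j\<in>{j. j * k \<le> n}. (if j = 0 then 1 else 2) * fps_nth A (n - j * k))"
    using assms by (intro sum.cong) (auto simp: gk_def)
  finally show ?thesis .
qed

lemma PN_nth: "fps_nth (PN N :: 'a::comm_ring_1 fps) n = of_nat (w N n)"
proof (induct N arbitrary: n)
  case 0
  then show ?case by (simp add: PN_def w_0)
next
  case (Suc N)
  have "PN (Suc N) = (gk (Suc N) :: 'a fps) * PN N" by (simp add: PN_def mult.commute)
  then have "fps_nth (PN (Suc N) :: 'a fps) n = (\<Sum>j\<in>{j. j * Suc N \<le> n}. (if j = 0 then 1 else 2) * of_nat (w N (n - j * Suc N)))"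
    by (simp add: gk_mult_nth Suc)
  also have "\<dots> = of_nat (w (Suc N) n)"
    by (simp add: w_Suc of_nat_sum, rule sum.cong) auto
  finally show ?case .
qed

lemma le_sum_mset: "x \<in># M \<Longrightarrow> x \<le> sum_mset (M::nat multiset)"
proof -
  assume "x \<in># M"
  then have "sum_mset M = x + sum_mset (M - {#x#})" by (rule sum_mset.remove)
  then show ?thesis by simp
qed

lemma Par_eq: "i \<le> N \<Longrightarrow> Par N i = Par i i"
proof (rule set_eqI)
  fix M assume iN: "i \<le> N"
  show "M \<in> Par N i \<longleftrightarrow> M \<in> Par i i"
  proof (cases "sum_mset M = i")
    case True
    then have "\<forall>x\<in>#M. x \<le> i" using le_sum_mset by blast
    then show ?thesis using True iN unfolding Par_def subset_iff by auto
  next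
    case False then show ?thesis by (simp add: Par_def)
  qed
qed

lemma w_eq: "i \<le> N \<Longrightarrow> w N i = w i i"
  unfolding w_def by (drule Par_eq) simp

lemma ov_w: "overpartition_count n = w n n"
proof -
  have eq: "overpartitions n = (SIGMA M:Par n n. Pow (set_mset M))"
  proof -
    have "(\<forall>k\<in>#M. 0 < k) \<and> sum_mset M = n \<longleftrightarrow> M \<in> Par n n" for M
    proof
      assume h: "(\<forall>k\<in>#M. 0 < k) \<and> sum_mset M = n"
      have "x \<le> n" if "x \<in># M" for x using le_sum_mset[OF that] h by simp
      then show "M \<in> Par n n" using h by (auto simp: Par_def Suc_le_eq)
    qed (auto simp: Par_def)
    then show ?thesis unfolding overpartitions_def by auto
  qed
  show ?thesis unfolding overpartition_count_def eq w_def
    using finite_Par by (simp add: card_Pow)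
qed

fun qbin :: "'a::comm_ring_1 \<Rightarrow> nat \<Rightarrow> nat \<Rightarrow> 'a" where
  "qbin q 0 j = (if j = 0 then 1 else 0)"
| "qbin q (Suc m) j = (if j = 0 then 1 else qbin q m j + q^(Suc m - j) * qbin q m (j - 1))"

definition qp :: "'a::comm_ring_1 \<Rightarrow> nat \<Rightarrow> 'a" where
  "qp q n = (\<Prod>i<n. 1 - q^(Suc i))"

lemma qp_Suc: "qp q (Suc n) = qp q n * (1 - q^(Suc n))"
  by (simp add: qp_def)
lemma qp_0[simp]: "qp q 0 = 1" by (simp add: qp_def)

lemma qbin_0[simp]: "qbin q m 0 = 1" by (cases m) auto
lemma qbin_gt: "m < j \<Longrightarrow> qbin q m j = 0"
  by (induct m arbitrary: j) auto
lemma qbin_diag: "qbin q m m = 1"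
  by (induct m) (auto simp: qbin_gt)

lemma qbin_prod: "j \<le> m \<Longrightarrow> qbin q m j * qp q j * qp q (m - j) = qp q m"
proof (induct m arbitrary: j)
  case 0 then show ?case by simp
next
  case (Suc m)
  show ?case
  proof (cases "j = 0")
    case True then show ?thesis by simp
  next
    case False
    show ?thesis
    proof (cases "j = Suc m")
      case True then show ?thesis by (simp add: qbin_gt qbin_diag)
    next
      case False2: False
      with Suc.prems have jm: "j \<le> m" by simp
      obtain i where j: "j = Suc i" using \<open>j \<noteq> 0\<close> by (cases j) auto
      have i: "i \<le> m" "m - i = Suc (m - j)" using jm j by auto
      have IH1: "qbin q m j * qp q j * qp q (m - j) = qp q m" using Suc.hyps[OF jm] .
      have IH2: "qbin q m i * qp q i * qp q (m - i) = qp q m" using Suc.hyps[OF i(1)] .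
      have s: "Suc m - j = Suc (m - j)" using jm by simp
      have "qbin q (Suc m) j * qp q j * qp q (Suc m - j)
          = (qbin q m j * qp q j * qp q (m - j)) * (1 - q^(Suc (m - j)))
            + q^(Suc (m - j)) * (qbin q m i * qp q i * qp q (m - i)) * (1 - q^j)"
        using \<open>j \<noteq> 0\<close> unfolding s by (simp add: j qp_Suc i(2) algebra_simps)
      also have "\<dots> = qp q m * (1 - q^(Suc (m - j)) + q^(Suc (m - j)) - q^(Suc (m - j)) * q^j)"
        unfolding IH1 IH2 by (simp add: algebra_simps)
      also have "q^(Suc (m - j)) * q^j = q^(Suc m)"
      proof -
        have "Suc (m - j) + j = Suc m" using jm by simp
        then show ?thesis by (metis power_add)
      qed
      finally show ?thesis by (simp add: qp_Suc)
    qed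
  qed
qed

definition tri :: "nat \<Rightarrow> nat" where "tri j = j * (j - 1) div 2"

lemma tri_0[simp]: "tri 0 = 0" by (simp add: tri_def)

lemma tri_Suc: "tri (Suc i) = tri i + i"
proof -
  have "Suc i * i = i * (i - 1) + 2 * i" by (cases i) (auto simp: algebra_simps)
  moreover have "even (i * (i - 1))" by (cases i) auto
  ultimately show ?thesis unfolding tri_def by auto
qed

lemma cauchy:
  "(\<Prod>i<m. y + z * q^i) = (\<Sum>j\<le>m. q^(tri j) * qbin q m j * z^j * y^(m - j))"
proof (induct m)
  case 0 then show ?case by simp
next
  case (Suc m)
  define S where "S = (\<Sum>j\<le>m. q^(tri j) * qbin q m j * z^j * y^(m - j))"
  define a where "a j = q^(tri j) * qbin q m j * z^j * y^(Suc m - j)" for j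
  define b where "b j = (if j = 0 then 0 else q^(tri j) * q^(Suc m - j) * qbin q m (j - 1) * z^j * y^(Suc m - j))" for j
  have "(\<Sum>j\<le>Suc m. q^(tri j) * qbin q (Suc m) j * z^j * y^(Suc m - j)) = (\<Sum>j\<le>Suc m. a j + b j)"
    by (rule sum.cong) (auto simp: a_def b_def algebra_simps)
  also have "\<dots> = (\<Sum>j\<le>Suc m. a j) + (\<Sum>j\<le>Suc m. b j)" by (rule sum.distrib)
  also have "(\<Sum>j\<le>Suc m. a j) = y * S"
  proof -
    have "(\<Sum>j\<le>Suc m. a j) = (\<Sum>j\<le>m. a j)" by (simp add: a_def qbin_gt)
    also have "\<dots> = (\<Sum>j\<le>m. y * (q^(tri j) * qbin q m j * z^j * y^(m - j)))"
      by (rule sum.cong) (auto simp: a_def Suc_diff_le algebra_simps)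
    finally show ?thesis by (simp add: S_def sum_distrib_left)
  qed
  also have "(\<Sum>j\<le>Suc m. b j) = z * q^m * S"
  proof -
    have "(\<Sum>j\<le>Suc m. b j) = b 0 + (\<Sum>i\<le>m. b (Suc i))" by (rule sum.atMost_Suc_shift)
    also have "\<dots> = (\<Sum>i\<le>m. z * q^m * (q^(tri i) * qbin q m i * z^i * y^(m - i)))"
    proof (simp add: b_def, rule sum.cong)
      fix i assume "i \<in> {..m}"
      then have "i \<le> m" by simp
      then have "q ^ tri (Suc i) * q ^ (m - i) = q^m * q^(tri i)"
        by (simp add: tri_Suc power_add[symmetric] add.commute)
      then show "q ^ tri (Suc i) * q ^ (m - i) * qbin q m i * (z * z ^ i) * y ^ (m - i) =
            z * q ^ m * (q ^ tri i * qbin q m i * z ^ i * y ^ (m - i))"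
        by (simp add: algebra_simps)
    qed simp
    finally show ?thesis by (simp add: S_def sum_distrib_left)
  qed
  finally show ?case using Suc by (simp add: S_def algebra_simps)
qed


definition Po :: "'a::comm_ring_1 \<Rightarrow> nat \<Rightarrow> 'a" where
  "Po q M = (\<Prod>i<M. 1 - q^(2*i+1))"
definition EE :: "nat \<Rightarrow> nat" where "EE M = M*(M-1) + (2*M-1)*M"
definition dd :: "nat \<Rightarrow> nat \<Rightarrow> nat" where "dd M j = (if M \<le> j then j - M else M - j)"

lemma prod_split: "(\<Prod>i<a+(b::nat). (f i::'a::comm_monoid_mult)) = (\<Prod>i<a. f i) * (\<Prod>i<b. f (a+i))"
  by (induct b) (auto simp: algebra_simps)

lemma prod_pow2: "(\<Prod>i<M. (q::'a::comm_ring_1)^(2*i)) = q^(M*(M-1))"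
proof (induct M)
  case 0 then show ?case by simp
next
  case (Suc M)
  have "(\<Prod>i<Suc M. q^(2*i)) = q^(M*(M-1)) * q^(2*M)" using Suc by simp
  also have "\<dots> = q^(M*(M-1) + 2*M)" by (simp add: power_add)
  also have "M*(M-1) + 2*M = Suc M * (Suc M - 1)" by (cases M) auto
  finally show ?case .
qed

lemma int_tri2: "2 * int (tri j) = int j * (int j - 1)"
proof -
  have "even (j * (j - 1))" by (cases j) auto
  then have "2 * tri j = j * (j - 1)" unfolding tri_def by simp
  then have "int (2 * tri j) = int (j * (j - 1))" by simp
  then show ?thesis by (cases j) (auto simp: algebra_simps)
qed

lemma exp_eq:
  assumes "j \<le> 2*M" "1 \<le> M"
  shows "2 * tri j + (2*M-1)*(2*M-j) = (dd M j)^2 + EE M"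
proof -
  have "int (2 * tri j + (2*M-1)*(2*M-j)) = int j * (int j - 1) + (2*int M-1)*(2*int M-int j)"
    using assms by (simp add: int_tri2 of_nat_diff)
  also have "\<dots> = (int j - int M)^2 + (int M*(int M-1) + (2*int M-1)*int M)"
    by (simp add: algebra_simps power2_eq_square)
  also have "(int j - int M)^2 = int ((dd M j)^2)"
    by (auto simp: dd_def of_nat_diff power2_eq_square algebra_simps)
  also have "int M*(int M-1) + (2*int M-1)*int M = int (EE M)"
    using assms by (simp add: EE_def of_nat_diff)
  finally show ?thesis by linarith
qed

lemma IM:
  assumes M: "1 \<le> M"
  shows "(-1)^M * q^(EE M) * (Po q M)^2
        = (\<Sum>j\<le>2*M. (-1)^j * q^((dd M j)^2 + EE M) * qbin (q^2) (2*M) j)"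
proof -
  have c: "(\<Prod>i<2*M. q^(2*M-1) + (-1) * (q^2)^i)
      = (\<Sum>j\<le>2*M. (q^2)^(tri j) * qbin (q^2) (2*M) j * (-1)^j * (q^(2*M-1))^(2*M-j))"
    by (rule cauchy)
  have rhs: "(\<Sum>j\<le>2*M. (q^2)^(tri j) * qbin (q^2) (2*M) j * (-1)^j * (q^(2*M-1))^(2*M-j))
      = (\<Sum>j\<le>2*M. (-1)^j * q^((dd M j)^2 + EE M) * qbin (q^2) (2*M) j)"
  proof (rule sum.cong[OF refl])
    fix j assume "j \<in> {..2*M}"
    then have j: "j \<le> 2*M" by simp
    have "(q^2)^(tri j) * (q^(2*M-1))^(2*M-j) = q^(2 * tri j + (2*M-1)*(2*M-j))"
      by (simp add: power_mult[symmetric] power_add)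
    also have "\<dots> = q^((dd M j)^2 + EE M)" using exp_eq[OF j M] by simp
    finally have eqn: "(q^2)^(tri j) * (q^(2*M-1))^(2*M-j) = q^((dd M j)^2 + EE M)" .
    have "(q^2)^(tri j) * qbin (q^2) (2*M) j * (-1)^j * (q^(2*M-1))^(2*M-j)
        = (-1)^j * ((q^2)^(tri j) * (q^(2*M-1))^(2*M-j)) * qbin (q^2) (2*M) j"
      by (simp only: mult_ac)
    then show "(q^2)^(tri j) * qbin (q^2) (2*M) j * (-1)^j * (q^(2*M-1))^(2*M-j)
        = (-1)^j * q^((dd M j)^2 + EE M) * qbin (q^2) (2*M) j"
      by (simp only: eqn)
  qed
  have "(\<Prod>i<2*M. q^(2*M-1) + (-1) * (q^2)^i)
     = (\<Prod>i<M. q^(2*M-1) + (-1) * (q^2)^i) * (\<Prod>i<M. q^(2*M-1) + (-1) * (q^2)^(M+i))"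
    using prod_split[of "\<lambda>i. q^(2*M-1) + (-1) * (q^2)^i" M M] by (simp add: mult_2)
  also have "(\<Prod>i<M. q^(2*M-1) + (-1) * (q^2)^i) = (\<Prod>i<M. (-1) * q^(2*i) * (1 - q^(2*(M - Suc i)+1)))"
  proof (rule prod.cong[OF refl])
    fix i assume "i \<in> {..<M}"
    then have "2*M-1 = 2*i + (2*(M - Suc i)+1)" by auto
    then have "q^(2*M-1) = q^(2*i) * q^(2*(M - Suc i)+1)" by (simp add: power_add)
    then show "q^(2*M-1) + (-1) * (q^2)^i = (-1) * q^(2*i) * (1 - q^(2*(M - Suc i)+1))"
      by (simp add: power_mult[symmetric] algebra_simps)
  qed
  also have "\<dots> = (-1)^M * q^(M*(M-1)) * Po q M"
  proof -
    have "(\<Prod>i<M. (-1) * q^(2*i) * (1 - q^(2*(M - Suc i)+1)))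
        = (\<Prod>i<M. (-1::'a)) * (\<Prod>i<M. q^(2*i)) * (\<Prod>i<M. 1 - q^(2*(M - Suc i)+1))"
      by (simp only: prod.distrib)
    also have "(\<Prod>i<M. 1 - q^(2*(M - Suc i)+1)) = Po q M"
      unfolding Po_def by (rule prod.nat_diff_reindex)
    finally show ?thesis by (simp add: prod_pow2)
  qed
  also have "(\<Prod>i<M. q^(2*M-1) + (-1) * (q^2)^(M+i)) = (\<Prod>i<M. q^(2*M-1) * (1 - q^(2*i+1)))"
  proof (rule prod.cong[OF refl])
    fix i assume "i \<in> {..<M}"
    have h: "2*(M+i) = (2*M-1) + (2*i+1)" using M by auto
    have "(q^2)^(M+i) = q^(2*(M+i))" by (rule power_mult[symmetric])
    also have "\<dots> = q^((2*M-1) + (2*i+1))" by (simp only: h)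
    also have "\<dots> = q^(2*M-1) * q^(2*i+1)" by (rule power_add)
    finally have "(q^2)^(M+i) = q^(2*M-1) * q^(2*i+1)" .
    then show "q^(2*M-1) + (-1) * (q^2)^(M+i) = q^(2*M-1) * (1 - q^(2*i+1))"
      by (simp add: algebra_simps)
  qed
  also have "\<dots> = q^((2*M-1)*M) * Po q M"
    by (simp add: prod.distrib Po_def power_mult)
  finally have P: "(\<Prod>i<2*M. q^(2*M-1) + (-1) * (q^2)^i) = (-1)^M * q^(M*(M-1)) * Po q M * (q^((2*M-1)*M) * Po q M)" .
  have "(-1)^M * q^(M*(M-1)) * Po q M * (q^((2*M-1)*M) * Po q M) = (-1)^M * q^(EE M) * (Po q M)^2"
    unfolding EE_def power_add power2_eq_square by (simp only: mult_ac)
  then show ?thesis using P c rhs by simp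
qed

definition isunit :: "'a::comm_ring_1 fps \<Rightarrow> bool" where
  "isunit A \<longleftrightarrow> (\<exists>B. A * B = 1)"

lemma isunit_mult: "isunit A \<Longrightarrow> isunit B \<Longrightarrow> isunit (A * B)"
  unfolding isunit_def by (metis mult.assoc mult.left_commute mult_1_right)

lemma isunit_prod: "(\<And>i. i \<in> I \<Longrightarrow> isunit (f i)) \<Longrightarrow> isunit (prod f I)"
proof (induct I rule: infinite_finite_induct)
  case (infinite A) then show ?case by (simp add: isunit_def)
next
  case empty then show ?case by (simp add: isunit_def)
next
  case (insert x F) then show ?case by (simp add: isunit_mult)
qed

lemma isunit_1mX:
  assumes "0 < k"
  shows "isunit (1 - fps_X^k :: 'a::comm_ring_1 fps)"
proof -
  define H :: "'a fps" where "H = Abs_fps (\<lambda>n. if k dvd n then 1 else 0)"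
  have "(1 - fps_X^k) * H = 1"
  proof (rule fps_ext)
    fix n
    have "fps_nth ((1 - fps_X^k) * H) n = fps_nth H n - fps_nth (fps_X^k * H) n"
      by (simp add: algebra_simps)
    also have "\<dots> = (if n = 0 then 1 else 0)"
      using assms by (auto simp: fps_X_power_mult_nth H_def dvd_diff_nat elim: dvdE)
        (metis dvd_imp_le dvd_diff_nat dvd_refl le_add_diff_inverse2 dvd_add_left_iff less_imp_le_nat not_less)
    finally show "fps_nth ((1 - fps_X^k) * H) n = fps_nth 1 n" by simp
  qed
  then show ?thesis unfolding isunit_def by blast
qed

lemma eqm_cancel_unit:
  assumes "eqm m (A * U) (B * U)" "isunit U"
  shows "eqm m A B"
  using assms eqm_cancel unfolding isunit_def by blast

lemma eqm_shift:
  assumes "eqm m A B"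
  shows "eqm (k + m) (fps_X^k * A) (fps_X^k * B)"
  using assms by (auto simp: eqm_def fps_X_power_mult_nth)

lemma fps_X_power_cancel:
  assumes "fps_X^k * A = (fps_X^k * B :: 'a::comm_ring_1 fps)"
  shows "A = B"
proof (rule fps_ext)
  fix n
  have "fps_nth (fps_X^k * A) (n + k) = fps_nth (fps_X^k * B) (n + k)" using assms by simp
  then show "fps_nth A n = fps_nth B n" by (simp add: fps_X_power_mult_nth)
qed

lemma eqm_1pX: "m \<le> k \<Longrightarrow> eqm m (1 + c * fps_X^k) 1"
  by (auto simp: eqm_def fps_X_power_mult_right_nth)

lemma prod_stable:
  fixes L K :: nat
  assumes "L \<le> K" "\<And>i. L \<le> i \<Longrightarrow> i < K \<Longrightarrow> eqm m (f i) 1"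
  shows "eqm m (\<Prod>i<L. f i) (\<Prod>i<K. f i)"
proof -
  have "(\<Prod>i<K. f i) = (\<Prod>i<L. f i) * (\<Prod>i<K - L. f (L + i))"
    using prod_split[where a=L and b="K - L" and f=f] assms(1) by simp
  moreover have "eqm m (\<Prod>i<K - L. f (L + i)) (\<Prod>i<K - L. 1)"
    by (rule eqm_prod) (use assms in auto)
  ultimately show ?thesis
    using eqm_mult[OF eqm_refl[of m "\<Prod>i<L. f i"], of "\<Prod>i<K - L. f (L + i)" 1]
    by (simp add: eqm_sym)
qed

definition Pm :: "nat \<Rightarrow> 'a::comm_ring_1 fps" where "Pm L = qp fps_X L"
definition Pp :: "nat \<Rightarrow> 'a::comm_ring_1 fps" where "Pp L = (\<Prod>i<L. 1 + fps_X^(Suc i))"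
definition P2 :: "nat \<Rightarrow> 'a::comm_ring_1 fps" where "P2 L = qp (fps_X^2) L"
definition Pof :: "nat \<Rightarrow> 'a::comm_ring_1 fps" where "Pof L = Po fps_X L"

lemma neg1_pow_fps: "((-1::'a::comm_ring_1 fps)^k) = fps_const ((-1)^k)"
proof -
  have "(-1::'a fps) = fps_const (-1)" by (simp only: fps_const_neg[symmetric] fps_const_1_eq_1)
  then show ?thesis by (simp only: fps_const_power)
qed

lemma neg1_pow_nth: "fps_nth ((-1::'a::comm_ring_1 fps)^k * A) n = (-1)^k * fps_nth A n"
  by (simp add: neg1_pow_fps)

lemma isunit_P2: "isunit (P2 L :: 'a::comm_ring_1 fps)"
  unfolding P2_def qp_def
proof (rule isunit_prod)
  fix i
  have "(fps_X^2)^(Suc i) = (fps_X::'a fps)^(2 * Suc i)" by (rule power_mult[symmetric])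
  then show "isunit (1 - (fps_X^2)^(Suc i) :: 'a fps)" by (simp only:) (rule isunit_1mX, simp)
qed

lemma isunit_Pm: "isunit (Pm L :: 'a::comm_ring_1 fps)"
  unfolding Pm_def qp_def
proof (rule isunit_prod)
  fix i
  show "isunit (1 - fps_X^(Suc i) :: 'a fps)" by (rule isunit_1mX) simp
qed

lemma Pm_double: "(Pm (2*L) :: 'a::comm_ring_1 fps) = Pof L * P2 L"
proof (induct L)
  case 0 then show ?case by (simp add: Pm_def Pof_def P2_def Po_def)
next
  case (Suc L)
  have "(Pm (2 * Suc L) :: 'a fps) = Pm (2*L) * (1 - fps_X^(2*L+1)) * (1 - fps_X^(2*L+2))"
    by (simp add: Pm_def qp_Suc mult.assoc)
  also have "\<dots> = (Pof L * (1 - fps_X^(2*L+1))) * (P2 L * (1 - (fps_X^2)^(Suc L)))"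
  proof -
    have "(fps_X^2)^(Suc L) = (fps_X::'a fps)^(2 * Suc L)" by (rule power_mult[symmetric])
    also have "2 * Suc L = 2*L+2" by simp
    finally have b: "(fps_X^2)^(Suc L) = (fps_X::'a fps)^(2*L+2)" .
    show ?thesis unfolding b Suc by (simp only: mult_ac)
  qed
  also have "\<dots> = Pof (Suc L) * P2 (Suc L)"
    by (simp add: Pof_def Po_def P2_def qp_Suc)
  finally show ?case .
qed

lemma Pp_Pm: "(Pp L :: 'a::comm_ring_1 fps) * Pm L = P2 L"
proof -
  have "(Pp L :: 'a fps) * Pm L = (\<Prod>i<L. (1 + fps_X^(Suc i)) * (1 - fps_X^(Suc i)))"
    by (simp add: Pp_def Pm_def qp_def prod.distrib)
  also have "\<dots> = (\<Prod>i<L. 1 - (fps_X^2)^(Suc i))"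
  proof (rule prod.cong[OF refl])
    fix i
    have "(1 + fps_X^(Suc i)) * (1 - fps_X^(Suc i)) = (1 - fps_X^(Suc i) * fps_X^(Suc i) :: 'a fps)"
      by (simp add: algebra_simps)
    also have "fps_X^(Suc i) * fps_X^(Suc i) = ((fps_X^2)^(Suc i) :: 'a fps)"
      by (simp only: power2_eq_square power_mult_distrib)
    finally show "(1 + fps_X^(Suc i)) * (1 - fps_X^(Suc i)) = (1 - (fps_X^2)^(Suc i) :: 'a fps)" .
  qed
  finally show ?thesis by (simp add: P2_def qp_def)
qed

lemma stab_P2: "L \<le> K \<Longrightarrow> eqm (2*L+2) (P2 L :: 'a::comm_ring_1 fps) (P2 K)"
  unfolding P2_def qp_def
proof (rule prod_stable)
  fix i assume "L \<le> i" "i < K"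
  then have "eqm (2*L+2) (1 + (-1) * fps_X^(2 * Suc i)) (1 :: 'a fps)" by (intro eqm_1pX) auto
  moreover have "(1 - (fps_X^2)^(Suc i) :: 'a fps) = 1 + (-1) * fps_X^(2 * Suc i)"
    by (simp only: power_mult) simp
  ultimately show "eqm (2*L+2) (1 - (fps_X^2)^(Suc i)) (1 :: 'a fps)" by simp
qed

lemma stab_Pm: "L \<le> K \<Longrightarrow> eqm (L+1) (Pm L :: 'a::comm_ring_1 fps) (Pm K)"
  unfolding Pm_def qp_def
proof (rule prod_stable)
  fix i assume "L \<le> i" "i < K"
  then have "eqm (L+1) (1 + (-1) * fps_X^(Suc i)) (1 :: 'a fps)" by (intro eqm_1pX) auto
  then show "eqm (L+1) (1 - fps_X^(Suc i)) (1 :: 'a fps)" by simp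
qed

lemma qbin_trunc:
  assumes "j \<le> 2*M"
  shows "eqm (2 * min j (2*M - j) + 2) (qbin (fps_X^2) (2*M) j * P2 (2*M)) (1 :: 'a::comm_ring_1 fps)"
proof -
  define m where "m = 2 * min j (2*M - j) + 2"
  have e: "qbin (fps_X^2) (2*M) j * P2 j * P2 (2*M - j) = (P2 (2*M) :: 'a fps)"
    unfolding P2_def by (rule qbin_prod[OF assms])
  have s1: "eqm m (P2 j) (P2 (2*M) :: 'a fps)"
    using stab_P2[of j "2*M"] assms unfolding m_def by (auto intro: eqm_mono)
  have s2: "eqm m (P2 (2*M - j)) (P2 (2*M) :: 'a fps)"
    using stab_P2[of "2*M - j" "2*M"] unfolding m_def by (auto intro: eqm_mono)
  have "eqm m (qbin (fps_X^2) (2*M) j * P2 j * P2 (2*M - j)) (qbin (fps_X^2) (2*M) j * P2 (2*M) * P2 (2*M) :: 'a fps)"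
    by (intro eqm_mult s1 s2 eqm_refl)
  then have "eqm m ((qbin (fps_X^2) (2*M) j * P2 (2*M)) * P2 (2*M)) (1 * P2 (2*M) :: 'a fps)"
    unfolding e by (simp add: eqm_sym)
  then show ?thesis unfolding m_def[symmetric] by (rule eqm_cancel_unit) (rule isunit_P2)
qed

definition Th :: "nat \<Rightarrow> 'a::comm_ring_1 fps" where
  "Th M = (\<Sum>j\<le>2*M. (-1)^(j+M) * fps_X^((dd M j)^2))"

definition Fg :: "'a::comm_ring_1 fps" where
  "Fg = Abs_fps (\<lambda>n. (-1)^n * of_nat (card {k::int. k^2 = int n}))"

lemma neg1_sq: "(-1::'a::comm_ring_1)^M * (-1)^M = 1"
  by (simp add: power_add[symmetric])

lemma B1:
  assumes M: "1 \<le> M"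
  shows "(Pof M :: 'a::comm_ring_1 fps)^2 = (\<Sum>j\<le>2*M. (-1)^(j+M) * fps_X^((dd M j)^2) * qbin (fps_X^2) (2*M) j)"
proof -
  have h: "(-1)^M * fps_X^(EE M) * (Pof M :: 'a fps)^2
        = (\<Sum>j\<le>2*M. (-1)^j * fps_X^((dd M j)^2 + EE M) * qbin (fps_X^2) (2*M) j)"
    unfolding Pof_def by (rule IM[OF M])
  have "fps_X^(EE M) * (Pof M :: 'a fps)^2 = (-1)^M * ((-1)^M * fps_X^(EE M) * (Pof M :: 'a fps)^2)"
    by (simp add: mult.assoc[symmetric] neg1_sq)
  also have "\<dots> = (\<Sum>j\<le>2*M. (-1)^M * ((-1)^j * fps_X^((dd M j)^2 + EE M) * qbin (fps_X^2) (2*M) j))"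
    unfolding h by (rule sum_distrib_left)
  also have "\<dots> = fps_X^(EE M) * (\<Sum>j\<le>2*M. (-1)^(j+M) * fps_X^((dd M j)^2) * qbin (fps_X^2) (2*M) j)"
    unfolding sum_distrib_left by (rule sum.cong) (simp_all add: power_add mult_ac)
  finally show ?thesis by (rule fps_X_power_cancel)
qed

lemma dd_facts:
  assumes "j \<le> 2*M"
  shows "dd M j \<le> M" "min j (2*M - j) = M - dd M j"
  using assms by (auto simp: dd_def)

lemma sq_ineq: "2*d \<le> d^2 + (1::nat)"
proof (cases d)
  case (Suc e) then show ?thesis by (simp add: power2_eq_square)
qed simp

lemma B2:
  assumes M: "1 \<le> M"
  shows "eqm (2*M+1) ((Pof M :: 'a::comm_ring_1 fps)^2 * P2 (2*M)) (Th M)"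
proof -
  have "(Pof M :: 'a fps)^2 * P2 (2*M) = (\<Sum>j\<le>2*M. (-1)^(j+M) * (fps_X^((dd M j)^2) * (qbin (fps_X^2) (2*M) j * P2 (2*M))))"
    unfolding B1[OF M] sum_distrib_right by (simp add: mult_ac)
  moreover have "eqm (2*M+1) (\<Sum>j\<le>2*M. (-1)^(j+M) * (fps_X^((dd M j)^2) * (qbin (fps_X^2) (2*M) j * P2 (2*M))))
       (\<Sum>j\<le>2*M. (-1)^(j+M) * (fps_X^((dd M j)^2) * (1::'a fps)))"
  proof (rule eqm_sum, rule eqm_mult[OF eqm_refl])
    fix j assume "j \<in> {..2*M}"
    then have j: "j \<le> 2*M" by simp
    have "eqm ((dd M j)^2 + (2 * min j (2*M - j) + 2)) (fps_X^((dd M j)^2) * (qbin (fps_X^2) (2*M) j * P2 (2*M))) (fps_X^((dd M j)^2) * (1::'a fps))"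
      by (rule eqm_shift[OF qbin_trunc[OF j]])
    moreover have "2*M+1 \<le> (dd M j)^2 + (2 * min j (2*M - j) + 2)"
      using dd_facts[OF j] sq_ineq[of "dd M j"] by auto
    ultimately show "eqm (2*M+1) (fps_X^((dd M j)^2) * (qbin (fps_X^2) (2*M) j * P2 (2*M))) (fps_X^((dd M j)^2) * (1::'a fps))"
      by (rule eqm_mono)
  qed
  ultimately show ?thesis by (simp add: Th_def)
qed


lemma parity_dd: "(-1::'a::comm_ring_1)^(j+M) = (-1)^((dd M j)^2)"
proof -
  have "even (j+M) \<longleftrightarrow> even (dd M j)" by (auto simp: dd_def)
  then have "even (j+M) \<longleftrightarrow> even ((dd M j)^2)" by simp
  then show ?thesis by (simp add: minus_one_power_iff)
qed

lemma int_dd: "(int j - int M)^2 = int ((dd M j)^2)"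
  by (auto simp: dd_def of_nat_diff power2_eq_square algebra_simps)

lemma card_dd:
  assumes "n \<le> 2*M"
  shows "card {j. j \<le> 2*M \<and> (dd M j)^2 = n} = card {k::int. k^2 = int n}"
proof -
  have "bij_betw (\<lambda>j. int j - int M) {j. j \<le> 2*M \<and> (dd M j)^2 = n} {k::int. k^2 = int n}"
  proof (rule bij_betw_byWitness[where f'="\<lambda>k. nat (k + int M)"])
    show "\<forall>a\<in>{j. j \<le> 2*M \<and> (dd M j)^2 = n}. nat (int a - int M + int M) = a" by auto
    show "(\<lambda>j. int j - int M) ` {j. j \<le> 2*M \<and> (dd M j)^2 = n} \<subseteq> {k::int. k^2 = int n}"
      using int_dd by auto
    have bnd: "-int M \<le> k \<and> k \<le> int M" if "k^2 = int n" for k :: int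
    proof (rule ccontr)
      assume "\<not> (-int M \<le> k \<and> k \<le> int M)"
      then have "int M + 1 \<le> \<bar>k\<bar>" by auto
      then have "(int M + 1) * (int M + 1) \<le> \<bar>k\<bar> * \<bar>k\<bar>" by (intro mult_mono) auto
      then have "(int M + 1)^2 \<le> k^2" by (simp add: power2_eq_square)
      moreover have "(int M + 1)^2 = int M * int M + 2*int M + 1" by (simp add: power2_eq_square algebra_simps)
      moreover have "0 \<le> int M * int M" by simp
      moreover have "int n \<le> 2 * int M" using assms by simp
      ultimately show False using that by linarith
    qed
    show "\<forall>a'\<in>{k::int. k^2 = int n}. int (nat (a' + int M)) - int M = a'"
    proof
      fix a' assume "a' \<in> {k::int. k^2 = int n}"
      then have "-int M \<le> a'" using bnd by auto
      then show "int (nat (a' + int M)) - int M = a'" by simp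
    qed
    show "(\<lambda>k. nat (k + int M)) ` {k::int. k^2 = int n} \<subseteq> {j. j \<le> 2*M \<and> (dd M j)^2 = n}"
    proof
      fix j assume "j \<in> (\<lambda>k. nat (k + int M)) ` {k::int. k^2 = int n}"
      then obtain k where k: "k^2 = int n" and j: "j = nat (k + int M)" by auto
      have b: "-int M \<le> k \<and> k \<le> int M" using bnd k by auto
      then have "int j = k + int M" using j by auto
      then have "(int j - int M)^2 = int n" using k by simp
      then have "(dd M j)^2 = n" using int_dd[of j M] by simp
      moreover have "j \<le> 2*M" using b j by auto
      ultimately show "j \<in> {j. j \<le> 2*M \<and> (dd M j)^2 = n}" by simp
    qed
  qed
  then show ?thesis by (rule bij_betw_same_card)
qed

lemma A_trunc: "eqm (2*M+1) (Fg :: 'a::comm_ring_1 fps) (Th M)"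
  unfolding eqm_def
proof (intro allI impI)
  fix n assume n: "n < 2*M+1"
  have "fps_nth (Th M :: 'a fps) n = (\<Sum>j\<le>2*M. (-1)^(j+M) * (if n = (dd M j)^2 then 1 else 0))"
    by (simp add: Th_def fps_sum_nth neg1_pow_nth)
  also have "\<dots> = (\<Sum>j\<in>{j. j \<le> 2*M \<and> (dd M j)^2 = n}. (-1::'a)^n)"
    by (rule sum.mono_neutral_cong_right) (auto simp: parity_dd)
  also have "\<dots> = (-1)^n * of_nat (card {k::int. k^2 = int n})"
    using card_dd[of n M] n by simp
  finally show "fps_nth Fg n = fps_nth (Th M :: 'a fps) n" by (simp add: Fg_def)
qed

lemma gauss_trunc:
  assumes N: "1 \<le> N"
  shows "eqm (N+1) ((Fg :: 'a::comm_ring_1 fps) * Pp N) (Pm N)"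
proof -
  have m: "N+1 \<le> 2*N+1" by simp
  have e1: "eqm (N+1) (Fg :: 'a fps) ((Pof N)^2 * P2 (2*N))"
    using eqm_trans[OF A_trunc B2[OF N, THEN eqm_sym]] m eqm_mono by blast
  have e2: "eqm (N+1) (P2 (2*N)) (P2 N :: 'a fps)"
  proof -
    have "eqm (2*N+2) (P2 N) (P2 (2*N) :: 'a fps)" by (rule stab_P2) simp
    then have "eqm (N+1) (P2 N) (P2 (2*N) :: 'a fps)" by (rule eqm_mono) simp
    then show ?thesis by (rule eqm_sym)
  qed
  have e3: "eqm (N+1) (Pm (2*N)) (Pm N :: 'a fps)"
    by (rule eqm_sym, rule stab_Pm) simp
  have e12: "eqm (N+1) (Fg :: 'a fps) ((Pof N)^2 * P2 N)"
    using eqm_trans[OF e1 eqm_mult[OF eqm_refl e2]] .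
  have "eqm (N+1) ((Fg :: 'a fps) * Pp N) ((Pof N)^2 * P2 N * Pp N)"
    by (intro eqm_mult e12 eqm_refl)
  also have "(Pof N :: 'a fps)^2 * P2 N * Pp N = Pof N * Pm (2*N) * Pp N"
    unfolding Pm_double power2_eq_square by (simp only: mult_ac)
  finally have "eqm (N+1) ((Fg :: 'a fps) * Pp N) (Pof N * Pm (2*N) * Pp N)" .
  moreover have "eqm (N+1) (Pof N * Pm (2*N) * Pp N) (Pof N * Pm N * Pp N :: 'a fps)"
    by (intro eqm_mult e3 eqm_refl)
  moreover have "(Pof N * Pm N * Pp N :: 'a fps) = Pm (2*N)"
  proof -
    have "(Pof N * Pm N * Pp N :: 'a fps) = Pof N * (Pp N * Pm N)" by (simp only: mult_ac)
    also have "\<dots> = Pof N * P2 N" by (simp only: Pp_Pm)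
    also have "\<dots> = Pm (2*N)" by (rule Pm_double[symmetric])
    finally show ?thesis .
  qed
  ultimately show ?thesis using e3 by (metis eqm_trans)
qed

lemma gk_1mX: "0 < k \<Longrightarrow> gk k * (1 - fps_X^k) = (1 + fps_X^k :: 'a::comm_ring_1 fps)"
proof (rule fps_ext)
  fix n assume k: "0 < k"
  have "fps_nth (gk k * (1 - fps_X^k) :: 'a fps) n = fps_nth (gk k) n - (if n < k then 0 else fps_nth (gk k) (n - k))"
    by (simp add: algebra_simps fps_X_power_mult_right_nth)
  also have "\<dots> = fps_nth (1 + fps_X^k :: 'a fps) n"
  proof (cases "n < k")
    case True
    then have "\<not> k dvd n \<or> n = 0" using k by (auto dest: dvd_imp_le)
    then show ?thesis using True by (auto simp: gk_def)
  next
    case False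
    then have "k dvd n \<longleftrightarrow> k dvd (n - k)" by (simp add: dvd_minus_self)
    then show ?thesis using False k by (auto simp: gk_def)
  qed
  finally show "fps_nth (gk k * (1 - fps_X^k) :: 'a fps) n = fps_nth (1 + fps_X^k :: 'a fps) n" .
qed

lemma PN_Pm: "(PN N :: 'a::comm_ring_1 fps) * Pm N = Pp N"
proof -
  have "(PN N :: 'a fps) * Pm N = (\<Prod>i<N. gk (Suc i) * (1 - fps_X^(Suc i)))"
    by (simp add: PN_def Pm_def qp_def prod.distrib)
  also have "\<dots> = (\<Prod>i<N. 1 + fps_X^(Suc i))"
    by (rule prod.cong[OF refl]) (rule gk_1mX, simp)
  finally show ?thesis by (simp add: Pp_def)
qed

definition Pov :: "'a::comm_ring_1 fps" where
  "Pov = Abs_fps (\<lambda>n. of_nat (overpartition_count n))"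

lemma Pov_trunc: "eqm (N+1) (Pov :: 'a::comm_ring_1 fps) (PN N)"
  unfolding eqm_def
proof (intro allI impI)
  fix i assume "i < N+1"
  then have "w N i = w i i" by (intro w_eq) simp
  then show "fps_nth (Pov :: 'a fps) i = fps_nth (PN N) i"
    by (simp add: Pov_def PN_nth ov_w)
qed

theorem Fg_Pov: "(Fg :: 'a::comm_ring_1 fps) * Pov = 1"
proof (rule eqm_eq)
  fix m
  show "eqm m ((Fg :: 'a fps) * Pov) 1"
  proof (cases "m = 0")
    case True then show ?thesis by (simp add: eqm_def)
  next
    case False
    then have N: "1 \<le> m" by simp
    have "eqm (m+1) ((Fg :: 'a fps) * PN m * Pm m) (1 * Pm m)"
      using gauss_trunc[OF N] by (simp add: mult.assoc PN_Pm)
    then have a: "eqm (m+1) ((Fg :: 'a fps) * PN m) 1" by (rule eqm_cancel_unit) (rule isunit_Pm)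
    have "eqm (m+1) ((Fg :: 'a fps) * Pov) (Fg * PN m)"
      by (intro eqm_mult eqm_refl Pov_trunc)
    then have "eqm (m+1) ((Fg :: 'a fps) * Pov) 1" using a by (rule eqm_trans)
    then show ?thesis by (rule eqm_mono) simp
  qed
qed

lemma comp_mult_supp0:
  assumes S: "supp 0 S"
  shows "comp c (A * S) = comp c A * S"
proof (rule fps_ext)
  fix n
  show "fps_nth (comp c (A * S)) n = fps_nth (comp c A * S) n"
  proof (cases "n mod 5 = c")
    case True
    have "fps_nth (comp c A * S) n = (\<Sum>i=0..n. fps_nth A i * fps_nth S (n - i))"
      unfolding fps_mult_nth
    proof (rule sum.cong[OF refl])
      fix i assume i: "i \<in> {0..n}"
      show "fps_nth (comp c A) i * fps_nth S (n - i) = fps_nth A i * fps_nth S (n - i)"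
      proof (cases "(n - i) mod 5 = 0")
        case True
        then have "(i + (n - i)) mod 5 = i mod 5" by (metis mod_add_right_eq add_0_right)
        then have "i mod 5 = c" using i \<open>n mod 5 = c\<close> by simp
        then show ?thesis by (simp add: comp_def)
      next
        case False
        then show ?thesis using S by (simp add: supp_def)
      qed
    qed
    then show ?thesis using True by (simp add: comp_def fps_mult_nth)
  next
    case False
    have "fps_nth (comp c A * S) n = 0"
      unfolding fps_mult_nth
    proof (rule sum.neutral, intro ballI)
      fix i assume i: "i \<in> {0..n}"
      show "fps_nth (comp c A) i * fps_nth S (n - i) = 0"
      proof (cases "(n - i) mod 5 = 0 \<and> i mod 5 = c")
        case True
        then have "(i + (n - i)) mod 5 = c" by (metis mod_add_right_eq add_0_right)
        then show ?thesis using i False by simp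
      next
        case False
        then show ?thesis using S by (auto simp: supp_def comp_def)
      qed
    qed
    then show ?thesis using False by (simp add: comp_def)
  qed
qed

lemma supp0_sub5: "supp 0 (sub5 B)"
  by (auto simp: supp_def sub5_nth)

lemma E5_mult_sub5: "E5 (A * sub5 B) = E5 A * B"
proof (rule sub5_inj)
  have "sub5 (E5 (A * sub5 B)) = comp 0 (A * sub5 B)" by (simp add: comp0_E5)
  also have "\<dots> = comp 0 A * sub5 B" by (rule comp_mult_supp0[OF supp0_sub5])
  also have "\<dots> = sub5 (E5 A * B)" by (simp add: comp0_E5 sub5_mult)
  finally show "sub5 (E5 (A * sub5 B)) = sub5 (E5 A * B)" .
qed

lemma twistT: "twist T = (Fg :: 5 fps)"
proof (rule fps_ext)
  fix n
  have "{a. sq a = n} = {k::int. k^2 = int n}" using int_sq by (auto simp: sq_def)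
  then show "fps_nth (twist T) n = fps_nth (Fg :: 5 fps) n"
    by (simp add: twist_def T_nth Fg_def)
qed

lemma T3: "fps_nth (T^3) N = of_nat (card (S3 (int N)))"
proof -
  have "T^3 = (T*T)*T" by (simp add: eval_nat_numeral mult_ac)
  also have "\<dots> = gen (UNIV \<times> UNIV) s2 * T" by (simp only: T2)
  also have "\<dots> = gen ((UNIV \<times> UNIV) \<times> UNIV) (\<lambda>(p,c). s2 p + sq c)"
  proof -
    have ff: "finfib (UNIV \<times> UNIV) s2" unfolding s2_def by (rule finfib_prod) (rule finfib_sq)+
    show ?thesis unfolding T_def by (rule gen_mult[OF ff finfib_sq])
  qed
  finally have "fps_nth (T^3) N = of_nat (cnt ((UNIV \<times> UNIV) \<times> UNIV) (\<lambda>(p,c). s2 p + sq c) N)"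
    by (simp add: gen_nth)
  also have "cnt ((UNIV \<times> UNIV) \<times> UNIV) (\<lambda>(p,c). s2 p + sq c) N = card (S3 (int N))"
  proof -
    have "{x \<in> (UNIV \<times> UNIV) \<times> UNIV. (\<lambda>(p,c). s2 p + sq c) x = N} = S3 (int N)"
    proof -
      have eqv: "s2 (a,b) + sq c = N \<longleftrightarrow> a^2 + b^2 + c^2 = int N" for a b c
      proof -
        have e: "int (s2 (a,b) + sq c) = a^2 + b^2 + c^2" by (simp add: s2_def)
        have "s2 (a,b) + sq c = N \<longleftrightarrow> int (s2 (a,b) + sq c) = int N" by (rule of_nat_eq_iff[symmetric])
        then show ?thesis using e by simp
      qed
      show ?thesis
      proof (rule set_eqI)
        fix x :: "(int \<times> int) \<times> int"
        obtain a b c where x: "x = ((a,b),c)" by (metis prod.collapse)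
        show "x \<in> {x \<in> (UNIV \<times> UNIV) \<times> UNIV. (\<lambda>(p,c). s2 p + sq c) x = N} \<longleftrightarrow> x \<in> S3 (int N)"
          unfolding x S3_def using eqv[of a b c] by simp
      qed
    qed
    then show ?thesis by (simp add: cnt_def)
  qed
  finally show ?thesis .
qed


lemma key5:
  "(of_nat (overpartition_count (5 * n)) :: 5) = (-1)^n * of_nat (overpartition_count (20 * n))"
proof -
  define F :: "5 fps" where "F = Fg"
  define P :: "5 fps" where "P = Pov"
  have FP: "F * P = 1" unfolding F_def P_def by (rule Fg_Pov)
  have F4: "E5 (F^4) = F^4"
    unfolding F_def twistT[symmetric] twist_power[symmetric] E5_twist E5_T4 ..
  have "P * sub5 F = P * F^5" by (simp add: frob)
  also have "\<dots> = (F * P) * F^4" by (simp add: eval_nat_numeral mult_ac)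
  also have "\<dots> = F^4" by (simp add: FP)
  finally have "E5 (P * sub5 F) = F^4" using F4 by simp
  then have a: "E5 P * F = F^4" by (simp add: E5_mult_sub5)
  have "E5 P = E5 P * (F * P)" by (simp add: FP)
  also have "\<dots> = (E5 P * F) * P" by (simp add: mult_ac)
  also have "\<dots> = F^3 * (F * P)" unfolding a by (simp add: eval_nat_numeral mult_ac)
  finally have "E5 P = F^3" by (simp add: FP)
  then have E5P: "E5 P = twist (T^3)" by (simp add: F_def twistT[symmetric] twist_power)
  have c: "(of_nat (overpartition_count (5 * m)) :: 5) = (-1)^m * of_nat (card (S3 (int m)))" for m
  proof -
    have "(of_nat (overpartition_count (5 * m)) :: 5) = fps_nth (E5 P) m"
      by (simp add: E5_def P_def Pov_def)
    also have "\<dots> = (-1)^m * of_nat (card (S3 (int m)))"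
      unfolding E5P by (simp add: twist_def T3)
    finally show ?thesis .
  qed
  have "(of_nat (overpartition_count (20 * n)) :: 5) = of_nat (overpartition_count (5 * (4 * n)))" by simp
  also have "\<dots> = (-1)^(4*n) * of_nat (card (S3 (int (4*n))))" by (rule c)
  also have "\<dots> = of_nat (card (S3 (int n)))"
    using r3_4[of "int n"] by (simp add: power_mult)
  finally have d: "(of_nat (overpartition_count (20 * n)) :: 5) = of_nat (card (S3 (int n)))" .
  show ?thesis unfolding c d ..
qed

theorem theorem1p1:
  fixes n :: nat
  shows "[int (overpartition_count (5 * n)) = (-1) ^ n * int (overpartition_count (20 * n))] (mod 5)"
proof -
  have "(of_int (int (overpartition_count (5 * n))) :: 5) = of_int ((-1) ^ n * int (overpartition_count (20 * n)))"
    using key5[of n] by simp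
  then have "[int (overpartition_count (5 * n)) = (-1) ^ n * int (overpartition_count (20 * n))] (mod int CHAR(5))"
    by (rule of_int_eq_iff_cong_CHAR[THEN iffD1])
  then show ?thesis by simp
qed

end
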